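(* Let $a\ge 0$, $\Delta t>0$, and let $z(\omega)$ be a real-valued function of the frequency $\omega$ with values in $[0,z_{\max}]$, where $z_{\max}=\max_\omega z(\omega)>0$. For each $\omega$ consider the quadratic $$(2+a\Delta t)^{2}\xi^{2}-4\big(2+a\Delta t-2\Delta t^{2}z(\omega)\big)\xi+(2-a\Delta t)\big(2+a\Delta t-2\Delta t^{2}z(\omega)\big)=0 .$$ If $$\Delta t\le\frac{2}{\sqrt{3\,z_{\max}}},$$ then both roots satisfy $|\xi|\le 1$ for every $\omega$.
   Context: This quadratic is the von Neumann characteristic equation of the semi-implicit (Nesterov-type) two-step scheme for $u_{tt}+au_t=-\nabla E$: $$v^{n}=u^{n}+\frac{2-a\Delta t}{2+a\Delta t}(u^{n}-u^{n-1}),\qquad u^{n+1}=v^{n}-\frac{2\Delta t^{2}}{2+a\Delta t}\nabla E(v^{n}),$$ obtained by linearizing $\nabla E$, writing the discrete Fourier transform of the linearized gradient of a grid function $w$ as $z(\omega)W(\omega)$ ($z$ the "gradient amplifier"), and substituting $U^{n\pm m}=\xi^{\pm m}U^n$. *)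

theory Defs
  imports Complex_Main
begin

end

theory Submission
  imports Defs
begin

lemma key_real:
  fixes h s x y :: real
  assumes h: "h \<ge> 0" and s0: "0 \<le> s" and s1: "s \<le> 4/3"
    and re: "(2+h)^2 * (x^2 - y^2) - 4*(2+h-2*s)*x + (2-h)*(2+h-2*s) = 0"
    and im: "y * (2*(2+h)^2*x - 4*(2+h-2*s)) = 0"
  shows "x^2 + y^2 \<le> 1"
proof -
  define A where "A = (2+h)^2"
  define B where "B = 4*(2+h-2*s)"
  define C where "C = (2-h)*(2+h-2*s)"
  have A0: "A > 0" unfolding A_def using h by simp
  have BA: "B \<le> 2*A" unfolding A_def B_def using h s0
    by (simp add: power2_eq_square algebra_simps)
  have BA2: "-B \<le> 2*A"
  proof -
    have "-B \<le> 8/3" unfolding B_def using s1 h by (simp add: algebra_simps)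
    moreover have "(2::real)*2 \<le> (2+h)*(2+h)" using h by (intro mult_mono) auto
    ultimately show ?thesis unfolding A_def by (simp add: power2_eq_square)
  qed
  have f1: "A - B + C \<ge> 0" unfolding A_def B_def C_def using h s0
    by (simp add: power2_eq_square algebra_simps)
  have fm1: "A + B + C \<ge> 0"
  proof -
    define t where "t = s*(6-h)"
    have e: "A + B + C = 16 + 8*h - 2*t" unfolding A_def B_def C_def t_def
      by (simp add: power2_eq_square algebra_simps)
    have "2*t \<le> 16 + 8*h"
    proof (cases "h \<le> 6")
      case True
      have "s*(6-h) \<le> 4/3*(6-h)" using s1 True by (intro mult_right_mono) auto
      hence "t \<le> 8 - 4/3*h" unfolding t_def by (simp add: algebra_simps)
      thus ?thesis using h by linarith
    next
      case False
      have "s*(6-h) \<le> 0" using s0 False by (intro mult_nonneg_nonpos) auto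
      thus ?thesis unfolding t_def using h by linarith
    qed
    thus ?thesis using e h by linarith
  qed
  have CA: "C \<le> A"
  proof -
    have c1: "2+h-2*s \<ge> -(2+h)" using s1 h by linarith
    have c2: "2+h-2*s \<le> 2+h" using s0 by linarith
    have "\<bar>2+h-2*s\<bar> \<le> 2+h" using c1 c2 by linarith
    moreover have "\<bar>2-h\<bar> \<le> 2+h" using h by linarith
    ultimately have "\<bar>2-h\<bar> * \<bar>2+h-2*s\<bar> \<le> (2+h)*(2+h)"
      by (intro mult_mono) auto
    then show ?thesis unfolding A_def C_def by (simp add: power2_eq_square abs_mult[symmetric])
  qed
  have re': "A*(x^2-y^2) - B*x + C = 0" using re unfolding A_def B_def C_def .
  have im': "y*(2*A*x - B) = 0" using im unfolding A_def B_def by (simp add: algebra_simps)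
  show ?thesis
  proof (cases "y = 0")
    case False
    hence "2*A*x = B" using im' by simp
    hence bx: "B*x = 2*(A*x^2)" by (simp add: power2_eq_square algebra_simps)
    have e1: "A*(x^2-y^2) = A*x^2 - A*y^2" by (simp add: algebra_simps)
    have e2: "A*(x^2+y^2) = A*x^2 + A*y^2" by (simp add: algebra_simps)
    have "A*(x^2+y^2) = C" using re' bx e1 e2 by (smt (verit))
    hence "A*(x^2+y^2) \<le> A*1" using CA by simp
    thus ?thesis using A0 by (simp add: mult_le_cancel_left)
  next
    case True
    hence q: "A*x^2 - B*x + C = 0" using re' by simp
    have "\<bar>x\<bar> \<le> 1"
    proof (rule ccontr)
      assume "\<not> \<bar>x\<bar> \<le> 1"
      hence "x > 1 \<or> x < -1" by linarith
      thus False
      proof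
        assume x: "x > 1"
        have e: "A*x^2 - B*x + C = (A-B+C) + (x-1)*(A*(x+1)-B)"
          by (simp add: power2_eq_square algebra_simps)
        have "A*(x+1) > A*2" using x A0 by simp
        hence "(x-1)*(A*(x+1)-B) > 0" using x BA by (intro mult_pos_pos) auto
        thus False using e q f1 by linarith
      next
        assume x: "x < -1"
        have e: "A*x^2 - B*x + C = (A+B+C) + (x+1)*(A*(x-1)-B)"
          by (simp add: power2_eq_square algebra_simps)
        have "A*(x-1) < A*(-2)" using x A0 by (intro mult_strict_left_mono) auto
        hence "(x+1)*(A*(x-1)-B) > 0" using x BA2 by (intro mult_neg_neg) auto
        thus False using e q fm1 by linarith
      qed
    qed
    thus ?thesis using True by (simp add: abs_square_le_1)
  qed
qed

theorem mainTheorem6: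
  fixes a dt zmax :: real and z :: "'w \<Rightarrow> real"
  assumes "a \<ge> 0" and "dt > 0"
    and "\<And>w. 0 \<le> z w \<and> z w \<le> zmax"
    and "\<exists>w. z w = zmax" and "zmax > 0"
    and "dt \<le> 2 / sqrt (3 * zmax)"
  shows "\<forall>w. \<forall>\<xi>::complex.
           complex_of_real ((2 + a*dt)^2) * \<xi>^2
           - complex_of_real (4 * (2 + a*dt - 2 * dt^2 * z w)) * \<xi>
           + complex_of_real ((2 - a*dt) * (2 + a*dt - 2 * dt^2 * z w)) = 0
           \<longrightarrow> cmod \<xi> \<le> 1"
proof (intro allI impI)
  fix w and \<xi> :: complex
  assume eq: "complex_of_real ((2 + a*dt)^2) * \<xi>^2
           - complex_of_real (4 * (2 + a*dt - 2 * dt^2 * z w)) * \<xi>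
           + complex_of_real ((2 - a*dt) * (2 + a*dt - 2 * dt^2 * z w)) = 0"
  have sq: "sqrt (3*zmax) > 0" using assms(5) by simp
  have "dt^2 \<le> (2 / sqrt (3 * zmax))^2"
    using assms(2,6) by (intro power_mono) auto
  also have "\<dots> = 4 / (3*zmax)" using assms(5) by (simp add: power_divide)
  finally have d2: "dt^2 \<le> 4/(3*zmax)" .
  have zw: "0 \<le> z w" "z w \<le> zmax" using assms(3) by auto
  have "dt^2 * z w \<le> dt^2 * zmax" using zw by (intro mult_left_mono) auto
  also have "\<dots> \<le> 4/(3*zmax) * zmax" using d2 assms(5) by (intro mult_right_mono) auto
  also have "\<dots> = 4/3" using assms(5) by simp
  finally have s1: "dt^2 * z w \<le> 4/3" .
  have s0: "0 \<le> dt^2 * z w" using zw by simp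
  have h: "a*dt \<ge> 0" using assms(1,2) by simp
  obtain x y where xi: "\<xi> = Complex x y" by (cases \<xi>)
  have re: "(2+a*dt)^2 * (x^2 - y^2) - 4*(2+a*dt-2*(dt^2 * z w))*x + (2-a*dt)*(2+a*dt-2*(dt^2 * z w)) = 0"
    using arg_cong[OF eq, of Re] unfolding xi by (simp add: power2_eq_square algebra_simps)
  have im: "y * (2*(2+a*dt)^2*x - 4*(2+a*dt-2*(dt^2 * z w))) = 0"
    using arg_cong[OF eq, of Im] unfolding xi by (simp add: power2_eq_square algebra_simps)
  have "x^2 + y^2 \<le> 1" using key_real[OF h s0 s1 re im] .
  thus "cmod \<xi> \<le> 1" unfolding xi cmod_def by simp
qed

end
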